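(* In the isotropic setting below, for all $F\in\mathrm{GL}^+(3)$ and $C_p\in\mathrm{PSym}(3)$ one has $$\widetilde\Sigma\,C_p\in\mathrm{Sym}(3),\quad C_p^{-1}\widetilde\Sigma\in\mathrm{Sym}(3),\quad (\mathrm{dev}_3\widetilde\Sigma)\,C_p\in\mathrm{Sym}(3),\quad C_p^{-1}\mathrm{dev}_3\widetilde\Sigma\in\mathrm{Sym}(3).$$
   Context: $W$ objective and isotropic, written $W(F_e)=\Psi(I_1(C_e),I_2(C_e),I_3(C_e))$ with $\Psi$ of class $C^1$; $I_1=\mathrm{tr}$, $I_2(X)=\mathrm{tr}(\mathrm{Cof}X)$, $I_3=\det$; $\widetilde W(X)=\Psi(I_1(X),I_2(X),I_3(X))$. $C=F^TF$. $\langle X,Y\rangle=\mathrm{tr}(XY^T)$, $D$ the gradient w.r.t. it. $\widetilde\Sigma:=2\,C\,D\widetilde W(CC_p^{-1})\,C_p^{-1}$. $\mathrm{dev}_3X=X-\frac13\mathrm{tr}(X)\mathbb{1}$. $\mathrm{Sym}(3)$, $\mathrm{PSym}(3)$: symmetric, resp. symmetric positive definite $3\times3$ matrices. *)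

theory Defs
  imports "HOL-Analysis.Analysis"
begin

type_synonym mat3 = "real^3^3"

definition frob :: "mat3 \<Rightarrow> mat3 \<Rightarrow> real" where
  "frob X Y = trace (X ** transpose Y)"

definition Dgrad :: "(mat3 \<Rightarrow> real) \<Rightarrow> mat3 \<Rightarrow> mat3" where
  "Dgrad f X = (THE G. (f has_derivative (\<lambda>H. frob G H)) (at X))"

text \<open>Cofactor matrix of a 3x3 matrix: row i is the cross product of rows i+1 and i+2
  (indices mod 3).\<close>
definition Cof :: "mat3 \<Rightarrow> mat3" where
  "Cof X = (\<chi> i. cross3 (X $ (i + 1)) (X $ (i + 2)))"

definition I1 :: "mat3 \<Rightarrow> real" where "I1 X = trace X"
definition I2 :: "mat3 \<Rightarrow> real" where "I2 X = trace (Cof X)"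
definition I3 :: "mat3 \<Rightarrow> real" where "I3 X = det X"

definition Wtilde :: "(real^3 \<Rightarrow> real) \<Rightarrow> mat3 \<Rightarrow> real" where
  "Wtilde \<Psi> X = \<Psi> (vector [I1 X, I2 X, I3 X])"

definition C1 :: "(real^3 \<Rightarrow> real) \<Rightarrow> bool" where
  "C1 \<Psi> \<longleftrightarrow> (\<exists>\<Psi>'. (\<forall>x. (\<Psi> has_derivative (\<lambda>h. \<Psi>' x \<bullet> h)) (at x)) \<and> continuous_on UNIV \<Psi>')"

definition Sym3 :: "mat3 set" where "Sym3 = {X. transpose X = X}"
definition PSym3 :: "mat3 set" where
  "PSym3 = {X. transpose X = X \<and> (\<forall>v. v \<noteq> 0 \<longrightarrow> v \<bullet> (X *v v) > 0)}"
definition GLplus3 :: "mat3 set" where "GLplus3 = {F. det F > 0}"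

definition dev3 :: "mat3 \<Rightarrow> mat3" where
  "dev3 X = X - (trace X / 3) *\<^sub>R mat 1"

definition SigmaT :: "(real^3 \<Rightarrow> real) \<Rightarrow> mat3 \<Rightarrow> mat3 \<Rightarrow> mat3" where
  "SigmaT \<Psi> F Cp = (let C = transpose F ** F in
     2 *\<^sub>R (C ** Dgrad (Wtilde \<Psi>) (C ** matrix_inv Cp) ** matrix_inv Cp))"

end

theory Submission
  imports Defs
begin

lemma p3: "(1::3)+1 = 2" "(1::3)+2 = 3" "(2::3)+1 = 3" "(3::3)+1 = 1" "(3::3)+2 = 2" "(2::3)+2 = 1"
  by simp_all
lemma cof_rows: "Cof X $ 1 = cross3 (X$2) (X$3)" "Cof X $ 2 = cross3 (X$3) (X$1)"
   "Cof X $ 3 = cross3 (X$1) (X$2)"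
  unfolding Cof_def vec_lambda_beta p3 by (rule refl)+
lemma cof_entry: "Cof X $ 1 $ 1 = X$2$2*X$3$3 - X$2$3*X$3$2"
  "Cof X $ 1 $ 2 = X$2$3*X$3$1 - X$2$1*X$3$3"
  "Cof X $ 1 $ 3 = X$2$1*X$3$2 - X$2$2*X$3$1"
  "Cof X $ 2 $ 1 = X$3$2*X$1$3 - X$3$3*X$1$2"
  "Cof X $ 2 $ 2 = X$3$3*X$1$1 - X$3$1*X$1$3"
  "Cof X $ 2 $ 3 = X$3$1*X$1$2 - X$3$2*X$1$1"
  "Cof X $ 3 $ 1 = X$1$2*X$2$3 - X$1$3*X$2$2"
  "Cof X $ 3 $ 2 = X$1$3*X$2$1 - X$1$1*X$2$3"
  "Cof X $ 3 $ 3 = X$1$1*X$2$2 - X$1$2*X$2$1"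
  unfolding cof_rows cross3_def vector_def by simp_all


lemma cof_inv: "transpose (Cof X) ** X = det X *\<^sub>R mat 1"
  unfolding vec_eq_iff forall_3
  by (simp add: matrix_matrix_mult_def transpose_def sum_3 cof_entry det_3 mat_def; algebra)

lemma frob_expand: "frob G H = (\<Sum>i\<in>UNIV. \<Sum>j\<in>UNIV. G$i$j * H$i$j)"
  by (simp add: frob_def trace_def matrix_matrix_mult_def transpose_def)

lemma frob3: "frob G H = G$1$1*H$1$1 + G$1$2*H$1$2 + G$1$3*H$1$3 + G$2$1*H$2$1 + G$2$2*H$2$2 + G$2$3*H$2$3
  + G$3$1*H$3$1 + G$3$2*H$3$2 + G$3$3*H$3$3"
  by (simp add: frob_expand sum_3)

lemma entry_deriv[derivative_intros]: "((\<lambda>X::mat3. X$i$j) has_derivative (\<lambda>H. H$i$j)) F"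
proof -
  have "bounded_linear (\<lambda>X::mat3. X$i$j)"
    using bounded_linear_compose[OF bounded_linear_vec_nth[of j] bounded_linear_vec_nth[of i]] .
  then show ?thesis by (rule bounded_linear_imp_has_derivative)
qed

lemma trace3: "trace (X::mat3) = X$1$1 + X$2$2 + X$3$3"
  by (simp add: trace_def sum_3)

lemma d_I1: "(I1 has_derivative (\<lambda>H. frob (mat 1) H)) (at X)"
proof -
  have e: "I1 = (\<lambda>X. X$1$1 + X$2$2 + X$3$3)" by (simp add: I1_def trace3 fun_eq_iff)
  show ?thesis unfolding e
    by (rule has_derivative_eq_rhs, (rule derivative_intros)+, simp add: frob3 mat_def fun_eq_iff)
qed

lemma d_I3: "(I3 has_derivative (\<lambda>H. frob (Cof X) H)) (at X)"
proof -
  have e: "I3 = (\<lambda>A. A$1$1 * A$2$2 * A$3$3 +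
    A$1$2 * A$2$3 * A$3$1 +
    A$1$3 * A$2$1 * A$3$2 -
    A$1$1 * A$2$3 * A$3$2 -
    A$1$2 * A$2$1 * A$3$3 -
    A$1$3 * A$2$2 * A$3$1)" by (simp add: I3_def det_3 fun_eq_iff)
  show ?thesis unfolding e
    by (rule has_derivative_eq_rhs, (rule derivative_intros)+, simp add: frob3 cof_entry fun_eq_iff algebra_simps)
qed

lemma I2_expl: "I2 = (\<lambda>A. A$2$2*A$3$3 - A$2$3*A$3$2 + (A$3$3*A$1$1 - A$3$1*A$1$3) + (A$1$1*A$2$2 - A$1$2*A$2$1))"
  by (simp add: I2_def trace3 cof_entry fun_eq_iff)

lemma d_I2: "(I2 has_derivative (\<lambda>H. frob (trace X *\<^sub>R mat 1 - transpose X) H)) (at X)"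
  unfolding I2_expl
  by (rule has_derivative_eq_rhs, (rule derivative_intros)+, simp add: frob3 trace3 mat_def transpose_def fun_eq_iff algebra_simps)


lemma tr_add: "transpose ((A::mat3) + B) = transpose A + transpose B"
  by (simp add: transpose_def vec_eq_iff)
lemma tr_diff: "transpose ((A::mat3) - B) = transpose A - transpose B"
  by (simp add: transpose_def vec_eq_iff)
lemma mm_scaleL: "((k::real) *\<^sub>R (A::mat3)) ** B = k *\<^sub>R (A ** B)"
  by (simp add: matrix_matrix_mult_def vec_eq_iff sum_distrib_left algebra_simps)
lemma mm_scaleR: "(A::mat3) ** ((k::real) *\<^sub>R B) = k *\<^sub>R (A ** B)"
  by (simp add: matrix_matrix_mult_def vec_eq_iff sum_distrib_left algebra_simps)
lemma mm_addR: "((A::mat3) + B) ** C = A ** C + B ** C"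
  by (simp add: matrix_matrix_mult_def vec_eq_iff sum.distrib algebra_simps)
lemma mm_diffR: "((A::mat3) - B) ** C = A ** C - B ** C"
  by (simp add: matrix_matrix_mult_def vec_eq_iff sum_subtractf algebra_simps)
lemma mm_diffL: "(A::mat3) ** (B - C) = A ** B - A ** C"
  by (simp add: matrix_matrix_mult_def vec_eq_iff sum_subtractf algebra_simps)

definition E3 :: "3 \<Rightarrow> 3 \<Rightarrow> mat3" where "E3 i j = (\<chi> a b. if a = i \<and> b = j then 1 else 0)"

lemma sum_if_out: "(\<Sum>ja\<in>A. if P then h ja else (0::real)) = (if P then \<Sum>ja\<in>A. h ja else 0)"
  by (cases P) simp_all

lemma frob_E: "frob G (E3 i j) = G$i$j"
  by (simp add: frob_expand E3_def if_distrib[of "\<lambda>x. _ * x"] cong: if_cong)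
     (simp add: if_if_eq_conj[symmetric] sum_if_out sum.delta)

lemma frob_inj: "frob G = frob G' \<Longrightarrow> G = G'"
  by (metis frob_E vec_eq_iff)

lemma Dgrad_eq: "(f has_derivative frob G) (at X) \<Longrightarrow> Dgrad f X = G"
  unfolding Dgrad_def
  by (rule the_equality, assumption, metis has_derivative_unique frob_inj)

lemma frob_lin: "frob (a *\<^sub>R A + b *\<^sub>R B + c *\<^sub>R D) H = a * frob A H + b * frob B H + c * frob D H"
  by (simp add: frob3 algebra_simps)

lemma Wt_deriv:
  assumes "C1 \<Psi>"
  shows "\<exists>a b c. Dgrad (Wtilde \<Psi>) X = a *\<^sub>R mat 1 + b *\<^sub>R (trace X *\<^sub>R mat 1 - transpose X) + c *\<^sub>R Cof X"
proof -
  obtain \<Psi>' where d: "\<And>x. (\<Psi> has_derivative (\<lambda>h. \<Psi>' x \<bullet> h)) (at x)"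
    using assms unfolding C1_def by auto
  define e1 :: "real^3" where "e1 = vector [1,0,0]"
  define e2 :: "real^3" where "e2 = vector [0,1,0]"
  define e3 :: "real^3" where "e3 = vector [0,0,1]"
  define g where "g = (\<lambda>X. I1 X *\<^sub>R e1 + I2 X *\<^sub>R e2 + I3 X *\<^sub>R e3)"
  have gv: "vector [I1 Y, I2 Y, I3 Y] = g Y" for Y
    by (simp add: g_def e1_def e2_def e3_def vec_eq_iff forall_3 vector_3)
  have W: "Wtilde \<Psi> = \<Psi> \<circ> g" by (rule ext) (simp only: Wtilde_def o_def gv)
  have dg: "(g has_derivative (\<lambda>H. frob (mat 1) H *\<^sub>R e1 + frob (trace X *\<^sub>R mat 1 - transpose X) H *\<^sub>R e2
       + frob (Cof X) H *\<^sub>R e3)) (at X)"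
    unfolding g_def by (intro has_derivative_add has_derivative_scaleR_left d_I1 d_I2 d_I3)
  let ?v = "\<Psi>' (g X)"
  have dW: "(Wtilde \<Psi> has_derivative frob (?v$1 *\<^sub>R mat 1 + ?v$2 *\<^sub>R (trace X *\<^sub>R mat 1 - transpose X) + ?v$3 *\<^sub>R Cof X)) (at X)"
    unfolding W
  proof (rule has_derivative_eq_rhs[OF diff_chain_at[OF dg d]])
    show "(\<lambda>h. ?v \<bullet> h) \<circ> (\<lambda>H. frob (mat 1) H *\<^sub>R e1 + frob (trace X *\<^sub>R mat 1 - transpose X) H *\<^sub>R e2
       + frob (Cof X) H *\<^sub>R e3) = frob (?v$1 *\<^sub>R mat 1 + ?v$2 *\<^sub>R (trace X *\<^sub>R mat 1 - transpose X) + ?v$3 *\<^sub>R Cof X)"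
      by (simp add: fun_eq_iff frob3 inner_add_right e1_def e2_def e3_def inner_vec_def sum_3 vector_3 algebra_simps)
  qed
  show ?thesis by (intro exI) (rule Dgrad_eq[OF dW])
qed

theorem mainTheorem7:
  fixes \<Psi> :: "real^3 \<Rightarrow> real" and F Cp :: "real^3^3"
  assumes "C1 \<Psi>" and "F \<in> GLplus3" and "Cp \<in> PSym3"
  shows "SigmaT \<Psi> F Cp ** Cp \<in> Sym3 \<and>
         matrix_inv Cp ** SigmaT \<Psi> F Cp \<in> Sym3 \<and>
         dev3 (SigmaT \<Psi> F Cp) ** Cp \<in> Sym3 \<and>
         matrix_inv Cp ** dev3 (SigmaT \<Psi> F Cp) \<in> Sym3"
proof -
  define C where "C = transpose F ** F"
  define P where "P = matrix_inv Cp"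
  define X where "X = C ** P"
  have Cs: "transpose C = C" by (simp add: C_def matrix_transpose_mul)
  have Cps: "transpose Cp = Cp" using assms(3) by (simp add: PSym3_def)
  have ker: "\<forall>x. Cp *v x = 0 \<longrightarrow> x = 0"
  proof (intro allI impI, rule ccontr)
    fix x assume x0: "Cp *v x = 0" and xn: "x \<noteq> 0"
    have "x \<bullet> (Cp *v x) > 0" using assms(3) xn unfolding PSym3_def by blast
    then show False using x0 by simp
  qed
  have "\<exists>B. B ** Cp = mat 1" using ker by (simp only: matrix_left_invertible_ker)
  then have inv: "invertible Cp" by (simp only: invertible_left_inverse)
  have PI: "Cp ** P = mat 1 \<and> P ** Cp = mat 1"
    unfolding P_def matrix_inv_def using inv unfolding invertible_def by (rule someI_ex)
  have Ps: "transpose P = P"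
  proof -
    have t: "transpose P ** Cp = mat 1" using PI Cps by (metis matrix_transpose_mul transpose_mat)
    have "transpose P = transpose P ** (Cp ** P)" using PI by simp
    also have "\<dots> = (transpose P ** Cp) ** P" by (rule matrix_mul_assoc)
    also have "\<dots> = P" using t by simp
    finally show ?thesis .
  qed
  obtain a b c where G: "Dgrad (Wtilde \<Psi>) X = a *\<^sub>R mat 1 + b *\<^sub>R (trace X *\<^sub>R mat 1 - transpose X) + c *\<^sub>R Cof X"
    using Wt_deriv[OF assms(1)] by blast
  have CX: "C ** transpose X = C ** P ** C"
    by (simp add: X_def matrix_transpose_mul Ps Cs matrix_mul_assoc)
  have CCof: "C ** Cof X = det X *\<^sub>R Cp"
  proof -
    have "transpose (Cof X) ** C ** P = det X *\<^sub>R mat 1" using cof_inv[of X] by (simp add: X_def matrix_mul_assoc)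
    then have "(transpose (Cof X) ** C ** P) ** Cp = det X *\<^sub>R Cp" by (simp add: mm_scaleL)
    then have "transpose (Cof X) ** C = det X *\<^sub>R Cp" using PI by (simp add: matrix_mul_assoc[symmetric])
    then have "transpose (transpose (Cof X) ** C) = transpose (det X *\<^sub>R Cp)" by simp
    then show ?thesis by (simp add: matrix_transpose_mul Cs transpose_scalar Cps)
  qed
  define K where "K = C ** Dgrad (Wtilde \<Psi>) X"
  have K: "K = a *\<^sub>R C + b *\<^sub>R (trace X *\<^sub>R C - C ** P ** C) + c *\<^sub>R (det X *\<^sub>R Cp)"
    by (simp add: K_def G matrix_add_ldistrib mm_scaleR mm_diffL CX CCof)
  have Ks: "transpose K = K"
    by (simp add: K tr_add tr_diff transpose_scalar Cs Cps matrix_transpose_mul Ps matrix_mul_assoc)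
  have Sig: "SigmaT \<Psi> F Cp = 2 *\<^sub>R (K ** P)"
    unfolding SigmaT_def Let_def C_def[symmetric] P_def[symmetric] X_def[symmetric] K_def[symmetric] ..
  have S1: "SigmaT \<Psi> F Cp ** Cp = 2 *\<^sub>R K"
    using PI by (simp add: Sig mm_scaleL matrix_mul_assoc[symmetric])
  have S2: "P ** SigmaT \<Psi> F Cp = 2 *\<^sub>R (P ** (K ** P))"
    by (simp add: Sig mm_scaleR)
  have T2: "transpose (P ** (K ** P)) = P ** (K ** P)"
    by (simp add: matrix_transpose_mul Ps Ks matrix_mul_assoc)
  show ?thesis
    unfolding P_def[symmetric] dev3_def Sym3_def mem_Collect_eq
    using PI by (simp add: mm_diffR mm_diffL mm_scaleL mm_scaleR S1 S2 T2 tr_diff transpose_scalar Ks Ps Cps)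
qed

end
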